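(* The set $\mathfrak{I}_{W} = \{ c_d^2, c_{(d-1)d}^2,\dots, c_{12}^2\}$ separates orbits for the action of $W_d(\mathbb{C})$ on $L$ and is a generating set for the field $\mathbb{C}(L)^{W_d(\mathbb{C})}$.
   Context: Let $d\ge 2$. Let $L\subset \mathbb{C}^d\oplus \mathfrak{so}(d,\mathbb{C})$ (where $\mathfrak{so}(d,\mathbb{C})$ is the space of complex skew-symmetric $d\times d$ matrices) be the linear subspace of pairs $(v,M)$ with $v=(0,\dots,0,c_d)^\top$ and $M$ the skew-symmetric tridiagonal matrix whose only possibly nonzero entries are $M_{i,i+1}=c_{i(i+1)}=-M_{i+1,i}$ for $1\le i\le d-1$. Let $W_d(\mathbb{C})$ be the group of diagonal $d\times d$ matrices with diagonal entries $w_i\in\{-1,1\}$; it acts on $L$ by $D\cdot(v,M)=(Dv,DMD^\top)$, i.e. $c_d\mapsto w_dc_d$ and $c_{i(i+1)}\mapsto w_iw_{i+1}c_{i(i+1)}$. The functions $c_d^2, c_{i(i+1)}^2$ are $W_d(\mathbb{C})$-invariant functions on $L$. $\mathbb{C}(L)^{W_d(\mathbb{C})}$ denotes the field of $W_d(\mathbb{C})$-invariant rational functions on $L$. A set of rational invariants separates orbits (is separating) if there is a non-empty Zariski-open subset of $L$ on which two points lie in the same orbit if and only if all functions in the set agree on them; here one can take the open subset where $c_d\neq0$ and all $c_{i(i+1)}\neq0$. *)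

theory Defs
  imports Complex_Main
begin

text \<open>Points of L are encoded by their coordinates c :: nat \<Rightarrow> complex,
  supported on {1..d}: c i (1 \<le> i < d) is c_{i(i+1)}, and c d is c_d.\<close>

definition L_pts :: "nat \<Rightarrow> (nat \<Rightarrow> complex) set" where
  "L_pts d = {c. \<forall>i. (i < 1 \<or> d < i) \<longrightarrow> c i = 0}"

definition vec_of :: "nat \<Rightarrow> (nat \<Rightarrow> complex) \<Rightarrow> nat \<Rightarrow> complex" where
  "vec_of d c = (\<lambda>i. if i = d then c d else 0)"

definition mat_of :: "nat \<Rightarrow> (nat \<Rightarrow> complex) \<Rightarrow> nat \<Rightarrow> nat \<Rightarrow> complex" where
  "mat_of d c = (\<lambda>i j. if 1 \<le> i \<and> i < d \<and> j = i + 1 then c i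
                      else if 1 \<le> j \<and> j < d \<and> i = j + 1 then - c j else 0)"

text \<open>Elements of W_d: diagonal sign matrices, given by w i \<in> {-1,1} for i \<in> {1..d}.\<close>
definition W_grp :: "nat \<Rightarrow> (nat \<Rightarrow> complex) set" where
  "W_grp d = {w. \<forall>i\<in>{1..d}. w i = 1 \<or> w i = -1}"

definition act_vec :: "(nat \<Rightarrow> complex) \<Rightarrow> (nat \<Rightarrow> complex) \<Rightarrow> nat \<Rightarrow> complex" where
  "act_vec w v = (\<lambda>i. w i * v i)"

definition act_mat :: "(nat \<Rightarrow> complex) \<Rightarrow> (nat \<Rightarrow> nat \<Rightarrow> complex) \<Rightarrow> nat \<Rightarrow> nat \<Rightarrow> complex" where
  "act_mat w M = (\<lambda>i j. w i * M i j * w j)"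

definition coords :: "nat \<Rightarrow> (nat \<Rightarrow> complex) \<Rightarrow> (nat \<Rightarrow> nat \<Rightarrow> complex) \<Rightarrow> nat \<Rightarrow> complex" where
  "coords d v M = (\<lambda>i. if 1 \<le> i \<and> i < d then M i (i + 1) else if i = d then v d else 0)"

definition act :: "nat \<Rightarrow> (nat \<Rightarrow> complex) \<Rightarrow> (nat \<Rightarrow> complex) \<Rightarrow> nat \<Rightarrow> complex" where
  "act d w c = coords d (act_vec w (vec_of d c)) (act_mat w (mat_of d c))"

inductive_set polyfun :: "nat \<Rightarrow> ((nat \<Rightarrow> complex) \<Rightarrow> complex) set" for d where
  const: "(\<lambda>x. a) \<in> polyfun d"
| coord: "1 \<le> i \<Longrightarrow> i \<le> d \<Longrightarrow> (\<lambda>x. x i) \<in> polyfun d"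
| add: "p \<in> polyfun d \<Longrightarrow> q \<in> polyfun d \<Longrightarrow> (\<lambda>x. p x + q x) \<in> polyfun d"
| mult: "p \<in> polyfun d \<Longrightarrow> q \<in> polyfun d \<Longrightarrow> (\<lambda>x. p x * q x) \<in> polyfun d"

definition is_ratfun :: "nat \<Rightarrow> ((nat \<Rightarrow> complex) \<Rightarrow> complex) \<Rightarrow> ((nat \<Rightarrow> complex) \<Rightarrow> complex) \<Rightarrow> bool" where
  "is_ratfun d p q \<longleftrightarrow> p \<in> polyfun d \<and> q \<in> polyfun d \<and> (\<exists>x\<in>L_pts d. q x \<noteq> 0)"

definition W_invariant_ratfun :: "nat \<Rightarrow> ((nat \<Rightarrow> complex) \<Rightarrow> complex) \<Rightarrow> ((nat \<Rightarrow> complex) \<Rightarrow> complex) \<Rightarrow> bool" where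
  "W_invariant_ratfun d p q \<longleftrightarrow> is_ratfun d p q \<and>
     (\<forall>w\<in>W_grp d. \<forall>x\<in>L_pts d. p (act d w x) * q x = p x * q (act d w x))"

definition sq_coords :: "(nat \<Rightarrow> complex) \<Rightarrow> nat \<Rightarrow> complex" where
  "sq_coords x = (\<lambda>i. (x i)^2)"

definition in_generated_field :: "nat \<Rightarrow> ((nat \<Rightarrow> complex) \<Rightarrow> complex) \<Rightarrow> ((nat \<Rightarrow> complex) \<Rightarrow> complex) \<Rightarrow> bool" where
  "in_generated_field d p q \<longleftrightarrow> (\<exists>P\<in>polyfun d. \<exists>Q\<in>polyfun d.
     (\<exists>x\<in>L_pts d. Q (sq_coords x) \<noteq> 0) \<and>
     (\<forall>x\<in>L_pts d. p x * Q (sq_coords x) = q x * P (sq_coords x)))"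

definition zariski_open :: "nat \<Rightarrow> (nat \<Rightarrow> complex) set \<Rightarrow> bool" where
  "zariski_open d U \<longleftrightarrow> (\<exists>S\<subseteq>polyfun d. U = {x\<in>L_pts d. \<exists>p\<in>S. p x \<noteq> 0})"

definition same_orbit :: "nat \<Rightarrow> (nat \<Rightarrow> complex) \<Rightarrow> (nat \<Rightarrow> complex) \<Rightarrow> bool" where
  "same_orbit d x y \<longleftrightarrow> (\<exists>w\<in>W_grp d. y = act d w x)"

definition separates_orbits :: "nat \<Rightarrow> ((nat \<Rightarrow> complex) \<Rightarrow> complex) set \<Rightarrow> bool" where
  "separates_orbits d F \<longleftrightarrow> (\<exists>U. zariski_open d U \<and> U \<noteq> {} \<and>
     (\<forall>x\<in>U. \<forall>y\<in>U. same_orbit d x y \<longleftrightarrow> (\<forall>f\<in>F. f x = f y)))"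

end

theory Submission
  imports Defs "HOL-Computational_Algebra.Polynomial"
begin

lemma poly_line:
  assumes "p \<in> polyfun d"
  shows "\<exists>P. \<forall>t. p (\<lambda>i. u i + t * v i) = poly P t"
  using assms
proof (induction rule: polyfun.induct)
  case (const a)
  then show ?case by (intro exI[of _ "[:a:]"]) simp
next
  case (coord i)
  then show ?case by (intro exI[of _ "[:u i, v i:]"]) simp
next
  case (add p q)
  then obtain P Q where "\<forall>t. p (\<lambda>i. u i + t * v i) = poly P t" "\<forall>t. q (\<lambda>i. u i + t * v i) = poly Q t" by blast
  then show ?case by (intro exI[of _ "P + Q"]) simp
next
  case (mult p q)
  then obtain P Q where "\<forall>t. p (\<lambda>i. u i + t * v i) = poly P t" "\<forall>t. q (\<lambda>i. u i + t * v i) = poly Q t" by blast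
  then show ?case by (intro exI[of _ "P * Q"]) simp
qed

lemma L_line: "a \<in> L_pts d \<Longrightarrow> b \<in> L_pts d \<Longrightarrow> (\<lambda>i. a i + t * (b i - a i)) \<in> L_pts d"
  by (simp add: L_pts_def)

lemma polyfun_prod_nonzero:
  assumes f: "f \<in> polyfun d" and g: "g \<in> polyfun d"
    and a: "a \<in> L_pts d" "f a \<noteq> 0" and b: "b \<in> L_pts d" "g b \<noteq> 0"
  shows "\<exists>x\<in>L_pts d. f x * g x \<noteq> 0"
proof -
  obtain P where P: "\<forall>t. f (\<lambda>i. a i + t * (b i - a i)) = poly P t"
    using poly_line[OF f, where u=a and v="\<lambda>i. b i - a i"] by blast
  obtain Q where Q: "\<forall>t. g (\<lambda>i. a i + t * (b i - a i)) = poly Q t"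
    using poly_line[OF g, where u=a and v="\<lambda>i. b i - a i"] by blast
  have "poly P 0 \<noteq> 0" using P a(2) spec[OF P, of 0] by simp
  hence P0: "P \<noteq> 0" by auto
  have "(\<lambda>i. a i + 1 * (b i - a i)) = b" by auto
  hence "poly Q 1 \<noteq> 0" using Q b(2) spec[OF Q, of 1] by simp
  hence Q0: "Q \<noteq> 0" by auto
  have "P * Q \<noteq> 0" using P0 Q0 by simp
  hence "finite {t. poly (P * Q) t = 0}" by (rule poly_roots_finite)
  moreover have "infinite (UNIV :: complex set)" by (rule infinite_UNIV_char_0)
  ultimately obtain t where "t \<notin> {t. poly (P * Q) t = 0}"
    by (metis (mono_tags) UNIV_I ex_new_if_finite)
  hence "f (\<lambda>i. a i + t * (b i - a i)) * g (\<lambda>i. a i + t * (b i - a i)) \<noteq> 0"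
    using P Q by simp
  thus ?thesis using L_line[OF a(1) b(1)] by blast
qed

lemma polyfun_cancel:
  assumes f: "f \<in> polyfun d" and g: "g \<in> polyfun d"
    and b: "b \<in> L_pts d" "g b \<noteq> 0" and h: "\<forall>x\<in>L_pts d. f x * g x = 0"
  shows "\<forall>x\<in>L_pts d. f x = 0"
  using polyfun_prod_nonzero[OF f g _ _ b] h by blast


lemma polyfun_local:
  assumes "p \<in> polyfun d" "\<And>i. 1 \<le> i \<Longrightarrow> i \<le> d \<Longrightarrow> x i = y i"
  shows "p x = p y"
  using assms by (induction rule: polyfun.induct) auto

lemma polyfun_scale:
  assumes "p \<in> polyfun d"
  shows "(\<lambda>x. p (\<lambda>j. c j * x j)) \<in> polyfun d"
  using assms
proof (induction rule: polyfun.induct)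
  case (coord i)
  then show ?case using polyfun.mult[OF polyfun.const[of "c i"] polyfun.coord[of i]] by simp
qed (auto intro: polyfun.intros)

lemma polyfun_sq:
  assumes "p \<in> polyfun d"
  shows "(\<lambda>x. p (sq_coords x)) \<in> polyfun d"
  using assms
proof (induction rule: polyfun.induct)
  case (coord i)
  then show ?case using polyfun.mult[OF polyfun.coord[of i] polyfun.coord[of i]]
    by (simp add: sq_coords_def power2_eq_square)
qed (auto intro: polyfun.intros)

lemma polyfun_diff:
  assumes "p \<in> polyfun d" "q \<in> polyfun d"
  shows "(\<lambda>x. p x - q x) \<in> polyfun d"
proof -
  have "(\<lambda>x. p x + (-1) * q x) \<in> polyfun d"
    by (intro polyfun.add polyfun.mult assms polyfun.const)
  thus ?thesis by simp
qed

definition flipc :: "nat \<Rightarrow> (nat \<Rightarrow> complex) \<Rightarrow> nat \<Rightarrow> complex" where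
  "flipc i x = x(i := - x i)"

lemma flipc_scale: "flipc i x = (\<lambda>j. (if j = i then -1 else 1) * x j)"
  by (auto simp: flipc_def)

lemma polyfun_flip: "p \<in> polyfun d \<Longrightarrow> (\<lambda>x. p (flipc i x)) \<in> polyfun d"
  unfolding flipc_scale by (rule polyfun_scale)

lemma flipc_L: "x \<in> L_pts d \<Longrightarrow> flipc i x \<in> L_pts d"
  by (simp add: L_pts_def flipc_def)

lemma flipc_invol[simp]: "flipc i (flipc i x) = x"
  by (auto simp: flipc_def)

lemma flipc_comm: "flipc i (flipc j x) = flipc j (flipc i x)"
  by (auto simp: flipc_def fun_upd_def)

lemma act_coord:
  assumes "1 \<le> i" "i \<le> d"
  shows "act d w x i = (if i < d then w i * w (Suc i) else w d) * x i"
proof (cases "i < d")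
  case True
  then show ?thesis using assms by (simp add: act_def coords_def act_vec_def vec_of_def act_mat_def mat_of_def)
next
  case False
  then have id: "i = d" using assms by simp
  have d1: "1 \<le> d" using assms by simp
  have "act d w x d = w d * x d"
    unfolding act_def coords_def act_vec_def vec_of_def using d1 by simp
  then show ?thesis using id by simp
qed

lemma act_outside: "1 \<le> d \<Longrightarrow> \<not> (1 \<le> i \<and> i \<le> d) \<Longrightarrow> act d w x i = 0"
  by (auto simp: act_def coords_def)

lemma act_L: "1 \<le> d \<Longrightarrow> act d w x \<in> L_pts d"
  by (auto simp: L_pts_def act_outside)

lemma polyfun_act:
  assumes "p \<in> polyfun d"
  shows "(\<lambda>x. p (act d w x)) \<in> polyfun d"
proof -
  have "(\<lambda>x. p (act d w x)) = (\<lambda>x. p (\<lambda>j. (if j < d then w j * w (Suc j) else w d) * x j))"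
    by (rule ext, rule polyfun_local[OF assms]) (simp add: act_coord)
  thus ?thesis using polyfun_scale[OF assms] by simp
qed

definition sqK :: "nat set \<Rightarrow> (nat \<Rightarrow> complex) \<Rightarrow> nat \<Rightarrow> complex" where
  "sqK K x = (\<lambda>i. if i \<in> K then (x i)^2 else x i)"

lemma decomp:
  assumes "F \<in> polyfun d" "1 \<le> i" "i \<le> d"
  shows "\<exists>A\<in>polyfun d. \<exists>B\<in>polyfun d. \<forall>y. F y = A (y(i := (y i)^2)) + y i * B (y(i := (y i)^2))"
  using assms(1)
proof (induction rule: polyfun.induct)
  case (const a)
  show ?case by (rule bexI[of _ "\<lambda>x. a"], rule bexI[of _ "\<lambda>x. 0"]) (auto intro: polyfun.const)
next
  case (coord j)
  show ?case
  proof (cases "j = i")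
    case True
    then show ?thesis
      by (intro bexI[of _ "\<lambda>x. 0"] bexI[of _ "\<lambda>x. 1"]) (auto intro: polyfun.const)
  next
    case False
    then show ?thesis using coord
      by (intro bexI[of _ "\<lambda>x. x j"] bexI[of _ "\<lambda>x. 0"]) (auto intro: polyfun.intros)
  qed
next
  case (add p q)
  then obtain A1 B1 A2 B2 where h: "A1 \<in> polyfun d" "B1 \<in> polyfun d" "A2 \<in> polyfun d" "B2 \<in> polyfun d"
    "\<forall>y. p y = A1 (y(i := (y i)^2)) + y i * B1 (y(i := (y i)^2))"
    "\<forall>y. q y = A2 (y(i := (y i)^2)) + y i * B2 (y(i := (y i)^2))" by metis
  have "\<forall>y. p y + q y = (\<lambda>x. A1 x + A2 x) (y(i := (y i)^2)) + y i * (\<lambda>x. B1 x + B2 x) (y(i := (y i)^2))"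
    using h(5,6) by (simp add: algebra_simps)
  note eq = this
  have m1: "(\<lambda>x. A1 x + A2 x) \<in> polyfun d" and m2: "(\<lambda>x. B1 x + B2 x) \<in> polyfun d"
    using h(1-4) by (blast intro: polyfun.intros)+
  show ?case
    apply (rule bexI[OF _ m1])
    apply (rule bexI[OF _ m2])
    using eq by blast
next
  case (mult p q)
  then obtain A1 B1 A2 B2 where h: "A1 \<in> polyfun d" "B1 \<in> polyfun d" "A2 \<in> polyfun d" "B2 \<in> polyfun d"
    "\<forall>y. p y = A1 (y(i := (y i)^2)) + y i * B1 (y(i := (y i)^2))"
    "\<forall>y. q y = A2 (y(i := (y i)^2)) + y i * B2 (y(i := (y i)^2))" by metis
  have "\<forall>y. p y * q y = (\<lambda>x. A1 x * A2 x + x i * (B1 x * B2 x)) (y(i := (y i)^2)) + y i * (\<lambda>x. A1 x * B2 x + B1 x * A2 x) (y(i := (y i)^2))"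
    using h(5,6) by (simp add: algebra_simps power2_eq_square)
  note eq = this
  have m1: "(\<lambda>x. A1 x * A2 x + x i * (B1 x * B2 x)) \<in> polyfun d"
    by (intro polyfun.add polyfun.mult h(1-4) polyfun.coord assms(2,3))
  have m2: "(\<lambda>x. A1 x * B2 x + B1 x * A2 x) \<in> polyfun d"
    by (intro polyfun.add polyfun.mult h(1-4))
  show ?case
    apply (rule bexI[OF _ m1])
    apply (rule bexI[OF _ m2])
    using eq by blast
qed

lemma even_step:
  assumes F: "F \<in> polyfun d" and i: "1 \<le> i" "i \<le> d" "i \<notin> K"
    and f: "\<forall>x\<in>L_pts d. f x = F (sqK K x)"
    and ev: "\<forall>x\<in>L_pts d. f (flipc i x) = f x"
  shows "\<exists>G\<in>polyfun d. \<forall>x\<in>L_pts d. f x = G (sqK (insert i K) x)"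
proof -
  obtain A B where AB: "A \<in> polyfun d" "B \<in> polyfun d"
    "\<forall>y. F y = A (y(i := (y i)^2)) + y i * B (y(i := (y i)^2))"
    using decomp[OF F i(1,2)] by blast
  have e1: "(sqK K x)(i := (sqK K x i)^2) = sqK (insert i K) x" for x
    using i(3) by (auto simp: sqK_def)
  have e2: "sqK K x i = x i" for x using i(3) by (simp add: sqK_def)
  have e3: "sqK (insert i K) (flipc i x) = sqK (insert i K) x" for x
    by (auto simp: sqK_def flipc_def)
  have e4: "sqK K (flipc i x) i = - x i" for x using i(3) by (simp add: sqK_def flipc_def)
  have e5: "(sqK K (flipc i x))(i := (sqK K (flipc i x) i)^2) = sqK (insert i K) x" for x
    using i(3) by (auto simp: sqK_def flipc_def)
  show ?thesis
  proof (rule bexI[OF _ AB(1)], intro ballI)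
    fix x assume x: "x \<in> L_pts d"
    have a: "f x = A (sqK (insert i K) x) + x i * B (sqK (insert i K) x)"
      using f x AB(3) e1 e2 by metis
    have b: "f (flipc i x) = A (sqK (insert i K) x) - x i * B (sqK (insert i K) x)"
      using f flipc_L[OF x] AB(3)[rule_format, of "sqK K (flipc i x)"] e4 e5 by simp
    define t where "t = x i * B (sqK (insert i K) x)"
    have "A (sqK (insert i K) x) + t = A (sqK (insert i K) x) - t"
      using a b ev x unfolding t_def by metis
    hence "t = 0" by (simp add: algebra_simps)
    thus "f x = A (sqK (insert i K) x)" using a unfolding t_def by simp
  qed
qed


lemma L_zero:
  assumes "x \<in> L_pts d" "\<not> (1 \<le> j \<and> j \<le> d)"
  shows "x j = 0"
proof -
  have "j < 1 \<or> d < j" using assms(2) by auto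
  thus ?thesis using assms(1) unfolding L_pts_def by blast
qed

lemma even_all:
  assumes f: "f \<in> polyfun d" and ev: "\<forall>i\<in>{1..d}. \<forall>x\<in>L_pts d. f (flipc i x) = f x"
  shows "\<exists>G\<in>polyfun d. \<forall>x\<in>L_pts d. f x = G (sq_coords x)"
proof -
  have "k \<le> d \<Longrightarrow> \<exists>G\<in>polyfun d. \<forall>x\<in>L_pts d. f x = G (sqK {1..k} x)" for k
  proof (induction k)
    case 0
    have "sqK {1..0} x = x" for x by (simp add: sqK_def)
    then show ?case using f by auto
  next
    case (Suc k)
    then obtain G where G: "G \<in> polyfun d" "\<forall>x\<in>L_pts d. f x = G (sqK {1..k} x)" by auto
    have "\<exists>G\<in>polyfun d. \<forall>x\<in>L_pts d. f x = G (sqK (insert (Suc k) {1..k}) x)"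
      by (rule even_step[OF G(1) _ _ _ G(2)]) (use Suc.prems ev in auto)
    moreover have "insert (Suc k) {1..k} = {1..Suc k}" by auto
    ultimately show ?case by simp
  qed
  then obtain G where G: "G \<in> polyfun d" "\<forall>x\<in>L_pts d. f x = G (sqK {1..d} x)" by blast
  have "x \<in> L_pts d \<Longrightarrow> sqK {1..d} x = sq_coords x" for x
    by (rule ext) (auto simp: sqK_def sq_coords_def dest: L_zero)
  thus ?thesis using G by auto
qed

lemma flip_from_W:
  assumes "1 \<le> i" "i \<le> d"
  shows "\<exists>w\<in>W_grp d. \<forall>x\<in>L_pts d. act d w x = flipc i x"
proof
  let ?w = "\<lambda>j. if j \<le> i then -1 else (1::complex)"
  show "?w \<in> W_grp d" by (auto simp: W_grp_def)
  show "\<forall>x\<in>L_pts d. act d ?w x = flipc i x"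
  proof (intro ballI ext)
    fix x j assume x: "x \<in> L_pts d"
    show "act d ?w x j = flipc i x j"
    proof (cases "1 \<le> j \<and> j \<le> d")
      case True
      then show ?thesis using act_coord[of j d ?w x] assms by (auto simp: flipc_def)
    next
      case False
      then show ?thesis using act_outside[of d j ?w x] assms L_zero[OF x False] by (auto simp: flipc_def)
    qed
  qed
qed

lemma sq_act:
  assumes "w \<in> W_grp d" "x \<in> L_pts d" "1 \<le> d"
  shows "sq_coords (act d w x) = sq_coords x"
proof
  fix j
  show "sq_coords (act d w x) j = sq_coords x j"
  proof (cases "1 \<le> j \<and> j \<le> d")
    case True
    have w2: "(w k)^2 = 1" if "1 \<le> k" "k \<le> d" for k
    proof -
      have "w k = 1 \<or> w k = -1" using assms(1) that unfolding W_grp_def by auto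
      thus ?thesis by auto
    qed
    show ?thesis
    proof (cases "j < d")
      case True
      then show ?thesis using act_coord[of j d w x] \<open>1 \<le> j \<and> j \<le> d\<close> w2[of j] w2[of "Suc j"]
        by (simp add: sq_coords_def power_mult_distrib)
    next
      case False
      then show ?thesis using act_coord[of j d w x] \<open>1 \<le> j \<and> j \<le> d\<close> w2[of d]
        by (simp add: sq_coords_def power_mult_distrib)
    qed
  next
    case False
    then show ?thesis using act_outside[of d j w x] assms L_zero[OF assms(2) False] by (auto simp: sq_coords_def)
  qed
qed

lemma alg1:
  fixes qf af pf bf q a p b :: complex
  assumes "qf * af = pf * bf" "q * a = p * b" "pf * q = p * qf"
  shows "(af * b - a * bf) * (q * qf) = 0"
  using assms by algebra

lemma ratio_inv:
  assumes pq: "p \<in> polyfun d" "q \<in> polyfun d" and ab: "a \<in> polyfun d" "b \<in> polyfun d"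
    and x0: "x0 \<in> L_pts d" "q x0 \<noteq> 0"
    and rel: "\<forall>x\<in>L_pts d. q x * a x = p x * b x"
    and pinv: "\<forall>x\<in>L_pts d. p (flipc i x) * q x = p x * q (flipc i x)"
  shows "\<forall>x\<in>L_pts d. a (flipc i x) * b x = a x * b (flipc i x)"
proof -
  have g: "(\<lambda>x. q x * q (flipc i x)) \<in> polyfun d"
    by (intro polyfun.mult pq polyfun_flip)
  have "(\<lambda>x. q (flipc i x)) (flipc i x0) \<noteq> 0" using x0 by simp
  then obtain y where y: "y \<in> L_pts d" "q y * q (flipc i y) \<noteq> 0"
    using polyfun_prod_nonzero[OF pq(2) polyfun_flip[OF pq(2), of i] x0 flipc_L[OF x0(1), of i]] by auto
  have f: "(\<lambda>x. a (flipc i x) * b x - a x * b (flipc i x)) \<in> polyfun d"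
    by (intro polyfun_diff polyfun.mult ab polyfun_flip)
  have "\<forall>x\<in>L_pts d. (a (flipc i x) * b x - a x * b (flipc i x)) * (q x * q (flipc i x)) = 0"
  proof
    fix x assume x: "x \<in> L_pts d"
    show "(a (flipc i x) * b x - a x * b (flipc i x)) * (q x * q (flipc i x)) = 0"
      by (rule alg1) (use rel x flipc_L[OF x, of i] pinv in auto)
  qed
  from polyfun_cancel[OF f g y this] show ?thesis by simp
qed

lemma forward:
  assumes d: "1 \<le> d" and W: "W_invariant_ratfun d p q"
  shows "in_generated_field d p q"
proof -
  from W have pq: "p \<in> polyfun d" "q \<in> polyfun d" and ex: "\<exists>x\<in>L_pts d. q x \<noteq> 0"
    and inv: "\<forall>w\<in>W_grp d. \<forall>x\<in>L_pts d. p (act d w x) * q x = p x * q (act d w x)"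
    unfolding W_invariant_ratfun_def is_ratfun_def by auto
  obtain x0 where x0: "x0 \<in> L_pts d" "q x0 \<noteq> 0" using ex by blast
  have pinv: "\<forall>x\<in>L_pts d. p (flipc i x) * q x = p x * q (flipc i x)" if i: "1 \<le> i" "i \<le> d" for i
  proof -
    obtain w where w: "w \<in> W_grp d" "\<forall>x\<in>L_pts d. act d w x = flipc i x"
      using flip_from_W[OF i] by blast
    show ?thesis using inv w by auto
  qed
  have "k \<le> d \<Longrightarrow> \<exists>a\<in>polyfun d. \<exists>b\<in>polyfun d. (\<exists>y\<in>L_pts d. b y \<noteq> 0) \<and>
      (\<forall>x\<in>L_pts d. q x * a x = p x * b x) \<and>
      (\<forall>i\<in>{1..k}. \<forall>x\<in>L_pts d. a (flipc i x) = a x \<and> b (flipc i x) = b x)" for k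
  proof (induction k)
    case 0
    show ?case using pq x0 by (intro bexI[OF _ pq(1)] bexI[OF _ pq(2)]) (auto simp: mult.commute)
  next
    case (Suc k)
    then obtain a b where ab: "a \<in> polyfun d" "b \<in> polyfun d" and bnz: "\<exists>y\<in>L_pts d. b y \<noteq> 0"
      and rel: "\<forall>x\<in>L_pts d. q x * a x = p x * b x"
      and ev: "\<forall>i\<in>{1..k}. \<forall>x\<in>L_pts d. a (flipc i x) = a x \<and> b (flipc i x) = b x"
      by auto
    obtain y where y: "y \<in> L_pts d" "b y \<noteq> 0" using bnz by blast
    define i where "i = Suc k"
    have i: "1 \<le> i" "i \<le> d" using Suc.prems unfolding i_def by auto
    have rat: "\<forall>x\<in>L_pts d. a (flipc i x) * b x = a x * b (flipc i x)"
      by (rule ratio_inv[OF pq ab x0 rel pinv[OF i]])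
    define a' where "a' = (\<lambda>x. a x * b (flipc i x))"
    define b' where "b' = (\<lambda>x. b x * b (flipc i x))"
    have a'p: "a' \<in> polyfun d" unfolding a'_def by (intro polyfun.mult ab polyfun_flip)
    have b'p: "b' \<in> polyfun d" unfolding b'_def by (intro polyfun.mult ab polyfun_flip)
    have "(\<lambda>x. b (flipc i x)) (flipc i y) \<noteq> 0" using y by simp
    then have b'nz: "\<exists>y\<in>L_pts d. b' y \<noteq> 0"
      using polyfun_prod_nonzero[OF ab(2) polyfun_flip[OF ab(2), of i] y flipc_L[OF y(1), of i]]
      unfolding b'_def by auto
    have rel': "\<forall>x\<in>L_pts d. q x * a' x = p x * b' x"
    proof
      fix x assume x: "x \<in> L_pts d"
      have "q x * a' x = (q x * a x) * b (flipc i x)" unfolding a'_def by (simp add: mult_ac)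
      also have "\<dots> = p x * b' x" using rel x unfolding b'_def by (simp add: mult_ac)
      finally show "q x * a' x = p x * b' x" .
    qed
    have ev': "\<forall>j\<in>{1..Suc k}. \<forall>x\<in>L_pts d. a' (flipc j x) = a' x \<and> b' (flipc j x) = b' x"
    proof (intro ballI)
      fix j x assume j: "j \<in> {1..Suc k}" and x: "x \<in> L_pts d"
      show "a' (flipc j x) = a' x \<and> b' (flipc j x) = b' x"
      proof (cases "j = i")
        case True
        have "a' (flipc j x) = a (flipc i x) * b x" unfolding a'_def True by simp
        also have "\<dots> = a' x" using rat x unfolding a'_def by simp
        finally show ?thesis unfolding True b'_def by (simp add: mult.commute)
      next
        case False
        then have jk: "j \<in> {1..k}" using j unfolding i_def by auto
        have fx: "flipc i x \<in> L_pts d" by (rule flipc_L[OF x])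
        have "flipc i (flipc j x) = flipc j (flipc i x)" by (rule flipc_comm)
        then show ?thesis using ev jk x fx unfolding a'_def b'_def by auto
      qed
    qed
    show ?case using a'p b'p b'nz rel' ev' by blast
  qed
  then obtain a b where ab: "a \<in> polyfun d" "b \<in> polyfun d" and bnz: "\<exists>y\<in>L_pts d. b y \<noteq> 0"
      and rel: "\<forall>x\<in>L_pts d. q x * a x = p x * b x"
      and ev: "\<forall>i\<in>{1..d}. \<forall>x\<in>L_pts d. a (flipc i x) = a x \<and> b (flipc i x) = b x"
    by blast
  obtain A where A: "A \<in> polyfun d" "\<forall>x\<in>L_pts d. a x = A (sq_coords x)"
    using even_all[OF ab(1)] ev by blast
  obtain B where B: "B \<in> polyfun d" "\<forall>x\<in>L_pts d. b x = B (sq_coords x)"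
    using even_all[OF ab(2)] ev by blast
  show ?thesis unfolding in_generated_field_def
  proof (rule bexI[OF _ A(1)], rule bexI[OF _ B(1)], rule conjI)
    show "\<exists>x\<in>L_pts d. B (sq_coords x) \<noteq> 0" using bnz B(2) by auto
    show "\<forall>x\<in>L_pts d. p x * B (sq_coords x) = q x * A (sq_coords x)"
      using rel A(2) B(2) by (metis mult.commute)
  qed
qed


lemma alg2:
  fixes py qy px qx Qs Ps :: complex
  assumes "py * Qs = qy * Ps" "px * Qs = qx * Ps"
  shows "(py * qx - px * qy) * Qs = 0"
  using assms by algebra

lemma backward:
  assumes d: "1 \<le> d" and R: "is_ratfun d p q" and G: "in_generated_field d p q"
  shows "W_invariant_ratfun d p q"
proof -
  from R have pq: "p \<in> polyfun d" "q \<in> polyfun d" unfolding is_ratfun_def by auto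
  from G obtain P Q y0 where PQ: "P \<in> polyfun d" "Q \<in> polyfun d"
    and y0: "y0 \<in> L_pts d" "Q (sq_coords y0) \<noteq> 0"
    and rel: "\<forall>x\<in>L_pts d. p x * Q (sq_coords x) = q x * P (sq_coords x)"
    unfolding in_generated_field_def by blast
  have "\<forall>x\<in>L_pts d. p (act d w x) * q x = p x * q (act d w x)" if w: "w \<in> W_grp d" for w
  proof -
    have f: "(\<lambda>x. p (act d w x) * q x - p x * q (act d w x)) \<in> polyfun d"
      by (intro polyfun_diff polyfun.mult pq polyfun_act)
    have g: "(\<lambda>x. Q (sq_coords x)) \<in> polyfun d" by (rule polyfun_sq[OF PQ(2)])
    have "\<forall>x\<in>L_pts d. (p (act d w x) * q x - p x * q (act d w x)) * Q (sq_coords x) = 0"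
    proof
      fix x assume x: "x \<in> L_pts d"
      have e: "sq_coords (act d w x) = sq_coords x" by (rule sq_act[OF w x d])
      show "(p (act d w x) * q x - p x * q (act d w x)) * Q (sq_coords x) = 0"
        by (rule alg2[where Ps = "P (sq_coords x)"]) (use rel x act_L[OF d] e in metis)+
    qed
    from polyfun_cancel[OF f g _ _ this] y0 show ?thesis by auto
  qed
  thus ?thesis using R unfolding W_invariant_ratfun_def by blast
qed

lemma separation:
  assumes d: "1 \<le> d"
  shows "separates_orbits d ((\<lambda>i x. (x i)^2) ` {1..d})"
  unfolding separates_orbits_def
proof (intro exI conjI)
  show "zariski_open d (L_pts d)" unfolding zariski_open_def
    by (rule exI[of _ "{\<lambda>x. 1}"]) (auto intro: polyfun.const)
  show "L_pts d \<noteq> {}" using L_pts_def by auto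
  show "\<forall>x\<in>L_pts d. \<forall>y\<in>L_pts d. same_orbit d x y = (\<forall>f\<in>(\<lambda>i x. (x i)\<^sup>2) ` {1..d}. f x = f y)"
  proof (intro ballI)
    fix x y assume x: "x \<in> L_pts d" and y: "y \<in> L_pts d"
    show "same_orbit d x y = (\<forall>f\<in>(\<lambda>i x. (x i)\<^sup>2) ` {1..d}. f x = f y)"
    proof
      assume "same_orbit d x y"
      then obtain w where w: "w \<in> W_grp d" "y = act d w x" unfolding same_orbit_def by blast
      have "sq_coords y = sq_coords x" using sq_act[OF w(1) x d] w(2) by simp
      then show "\<forall>f\<in>(\<lambda>i x. (x i)\<^sup>2) ` {1..d}. f x = f y"
        by (auto simp: sq_coords_def fun_eq_iff)
    next
      assume "\<forall>f\<in>(\<lambda>i x. (x i)\<^sup>2) ` {1..d}. f x = f y"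
      then have sq: "(x i)^2 = (y i)^2" if "1 \<le> i" "i \<le> d" for i using that by auto
      define e where "e = (\<lambda>j. if y j = x j then 1 else (-1::complex))"
      have e2: "(e j)^2 = 1" for j by (simp add: e_def)
      have ye: "y j = e j * x j" if "1 \<le> j" "j \<le> d" for j
      proof -
        have "y j = x j \<or> y j = - x j" using sq[OF that] by (metis power2_eq_iff)
        thus ?thesis by (auto simp: e_def)
      qed
      define w where "w = (\<lambda>j. \<Prod>k\<in>{j..d}. e k)"
      have w2: "(w j)^2 = 1" for j
        unfolding w_def by (simp add: prod_power_distrib e2)
      have wW: "w \<in> W_grp d" unfolding W_grp_def using w2 by (auto simp: power2_eq_1_iff)
      have "act d w x = y"
      proof
        fix j
        show "act d w x j = y j"
        proof (cases "1 \<le> j \<and> j \<le> d")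
          case True
          show ?thesis
          proof (cases "j < d")
            case True
            have "w j = e j * w (Suc j)" unfolding w_def
              using True by (simp add: prod.atLeast_Suc_atMost)
            hence "w j * w (Suc j) = e j * (w (Suc j))^2" by (simp add: power2_eq_square mult_ac)
            hence "w j * w (Suc j) = e j" using w2 by simp
            then show ?thesis using act_coord[of j d w x] True \<open>1 \<le> j \<and> j \<le> d\<close> ye[of j] by simp
          next
            case False
            hence "j = d" using \<open>1 \<le> j \<and> j \<le> d\<close> by simp
            have "w d = e d" unfolding w_def by simp
            then show ?thesis using act_coord[of j d w x] False \<open>1 \<le> j \<and> j \<le> d\<close> ye[of j] \<open>j = d\<close> by simp
          qed
        next
          case False
          then show ?thesis using act_outside[of d j w x] d L_zero[OF y False] by simp
        qed
      qed
      then show "same_orbit d x y" using wW unfolding same_orbit_def by blast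
    qed
  qed
qed

theorem proposition3p10:
  fixes d :: nat
  assumes "d \<ge> 2"
  shows "separates_orbits d ((\<lambda>i x. (x i)^2) ` {1..d})
    \<and> (\<forall>p q. W_invariant_ratfun d p q \<longleftrightarrow> is_ratfun d p q \<and> in_generated_field d p q)"
proof -
  have d: "1 \<le> d" using assms by simp
  show ?thesis
    using separation[OF d] forward[OF d] backward[OF d]
    unfolding W_invariant_ratfun_def by blast
qed

end
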